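(* Let $X$ be a path-connected topological space admitting a universal cover, $\mathbb A$ an abelian group, $\mathfrak a\in H^1(X;\mathbb A)$, $\alpha$ a singular one-cocycle representing $\mathfrak a$ and $x\in X$. Then: (1) $\mathfrak G_{x,\alpha}$ is a two-cocycle on $\mathrm{Homeo}(X,\mathfrak a)$, i.e. for all $g,h,k\in\mathrm{Homeo}(X,\mathfrak a)$, $$\mathfrak G_{x,\alpha}(h,k)-\mathfrak G_{x,\alpha}(gh,k)+\mathfrak G_{x,\alpha}(g,hk)-\mathfrak G_{x,\alpha}(g,h)=0;$$ (2) the value $\mathfrak G_{x,\alpha}(g,h)$ does not depend on the choice of the path from $x$ to $hx$; (3) the cohomology class of $\mathfrak G_{x,\alpha}$ depends neither on the reference point $x$ nor on the cocycle $\alpha$ representing $\mathfrak a$; (4) if either $g^*\alpha=\alpha$ or $hx=x$, then $\mathfrak G_{x,\alpha}(g,h)=0$.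
   Context: $\mathrm{Homeo}(X,\mathfrak a)$ is the group of homeomorphisms $g$ of $X$ with $g^*\mathfrak a=\mathfrak a$. $\mathfrak G_{x,\alpha}(g,h):=\int_\gamma g^*\alpha-\alpha$, where $\gamma$ is a path from $x$ to $hx$ and $\int_\gamma\sigma$ denotes the natural pairing of the chain $\gamma$ with the cochain $\sigma$. The cohomology class in (3) is in the group cohomology of $\mathrm{Homeo}(X,\mathfrak a)$ as a discrete group with trivial coefficients $\mathbb A$. *)

theory Defs
  imports "HOL-Analysis.Analysis" "HOL-Homology.Homology"
begin

definition covering_map_top :: "'c topology \<Rightarrow> 'a topology \<Rightarrow> ('c \<Rightarrow> 'a) \<Rightarrow> bool" where
  "covering_map_top C X p \<equiv>
     continuous_map C X p \<and> p ` topspace C = topspace X \<and>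
     (\<forall>x \<in> topspace X. \<exists>T. x \<in> T \<and> openin X T \<and>
        (\<exists>V. \<Union>V = {c \<in> topspace C. p c \<in> T} \<and>
             (\<forall>u \<in> V. openin C u) \<and>
             pairwise disjnt V \<and>
             (\<forall>u \<in> V. \<exists>q. homeomorphic_maps (subtopology C u) (subtopology X T) p q)))"

definition simply_connected_space :: "'a topology \<Rightarrow> bool" where
  "simply_connected_space X \<equiv>
     path_connected_space X \<and>
     (\<forall>p q. pathin X p \<and> p 1 = p 0 \<and> pathin X q \<and> q 1 = q 0 \<longrightarrow>
        homotopic_with (\<lambda>r. r 1 = r 0) (subtopology euclideanreal {0..1}) X p q)"

definition has_universal_cover :: "'c itself \<Rightarrow> 'a topology \<Rightarrow> bool" where
  "has_universal_cover (_ :: 'c itself) X \<equiv>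
     \<exists>(C :: 'c topology) p. covering_map_top C X p \<and> simply_connected_space C"

text \<open>A singular p-cochain is a function on singular p-simplices (only its values on
singular p-simplices of X matter).\<close>

type_synonym ('a, 'g) cochain = "((nat \<Rightarrow> real) \<Rightarrow> 'a) \<Rightarrow> 'g"

definition cobdry :: "nat \<Rightarrow> ('a, 'g::ab_group_add) cochain \<Rightarrow> ('a, 'g) cochain" where
  "cobdry p c = (\<lambda>\<sigma>. \<Sum>k\<in>{0..Suc p}.
       (if even k then c (singular_face (Suc p) k \<sigma>) else - c (singular_face (Suc p) k \<sigma>)))"

definition cocycle1 :: "'a topology \<Rightarrow> ('a, 'g::ab_group_add) cochain \<Rightarrow> bool" where
  "cocycle1 X \<alpha> \<equiv> (\<forall>\<tau>. singular_simplex 2 X \<tau> \<longrightarrow> cobdry 1 \<alpha> \<tau> = 0)"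

definition cohomologous1 :: "'a topology \<Rightarrow> ('a, 'g::ab_group_add) cochain \<Rightarrow> ('a, 'g) cochain \<Rightarrow> bool" where
  "cohomologous1 X \<alpha> \<beta> \<equiv>
     (\<exists>f. \<forall>\<sigma>. singular_simplex 1 X \<sigma> \<longrightarrow> \<alpha> \<sigma> - \<beta> \<sigma> = cobdry 0 f \<sigma>)"

definition pullback1 :: "('a \<Rightarrow> 'a) \<Rightarrow> ('a, 'g) cochain \<Rightarrow> ('a, 'g) cochain" where
  "pullback1 g \<alpha> = (\<lambda>\<sigma>. \<alpha> (simplex_map 1 g \<sigma>))"

text \<open>A path \<gamma> : [0,1] \<rightarrow> X viewed as a singular 1-simplex, from \<gamma> 0 (vertex 0) to \<gamma> 1 (vertex 1).\<close>
definition path_simplex :: "(real \<Rightarrow> 'a) \<Rightarrow> (nat \<Rightarrow> real) \<Rightarrow> 'a" where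
  "path_simplex \<gamma> = restrict (\<lambda>t. \<gamma> (t 1)) (standard_simplex 1)"

definition pair_path :: "(real \<Rightarrow> 'a) \<Rightarrow> ('a, 'g) cochain \<Rightarrow> 'g" where
  "pair_path \<gamma> \<sigma> = \<sigma> (path_simplex \<gamma>)"

text \<open>Homeomorphisms of X (normalised to be the identity outside topspace X, so that
this is literally a group under composition) preserving the class of \<alpha>.\<close>
definition Homeo_class :: "'a topology \<Rightarrow> ('a, 'g::ab_group_add) cochain \<Rightarrow> ('a \<Rightarrow> 'a) set" where
  "Homeo_class X \<alpha> = {g. homeomorphic_map X X g \<and> (\<forall>y. y \<notin> topspace X \<longrightarrow> g y = y)
                          \<and> cohomologous1 X (pullback1 g \<alpha>) \<alpha>}"

definition Gcoc :: "'a topology \<Rightarrow> 'a \<Rightarrow> ('a, 'g::ab_group_add) cochain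
                     \<Rightarrow> ('a \<Rightarrow> 'a) \<Rightarrow> ('a \<Rightarrow> 'a) \<Rightarrow> 'g" where
  "Gcoc X x \<alpha> g h =
     (let \<gamma> = (SOME \<gamma>. pathin X \<gamma> \<and> \<gamma> 0 = x \<and> \<gamma> 1 = h x)
      in pair_path \<gamma> (\<lambda>\<sigma>. pullback1 g \<alpha> \<sigma> - \<alpha> \<sigma>))"

definition group_cohomologous2 :: "('b set) \<Rightarrow> ('b \<Rightarrow> 'b \<Rightarrow> 'b) \<Rightarrow>
     ('b \<Rightarrow> 'b \<Rightarrow> 'g::ab_group_add) \<Rightarrow> ('b \<Rightarrow> 'b \<Rightarrow> 'g) \<Rightarrow> bool" where
  "group_cohomologous2 G mop c d \<equiv>
     (\<exists>f. \<forall>g\<in>G. \<forall>h\<in>G. c g h - d g h = f h - f (mop g h) + f g)"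

end

theory Submission
  imports Defs
begin

definition ptx :: "'a \<Rightarrow> (nat \<Rightarrow> real) \<Rightarrow> 'a" where
  "ptx p = restrict (\<lambda>t. p) (standard_simplex 0)"

lemma path_simplex_sing:
  assumes "pathin X \<gamma>" shows "singular_simplex 1 X (path_simplex \<gamma>)"
proof -
  have c1: "continuous_map (subtopology (powertop_real UNIV) (standard_simplex 1)) (subtopology euclideanreal {0..1}) (\<lambda>t. t 1)"
  proof -
    have "continuous_map (powertop_real UNIV) euclideanreal (\<lambda>t. t 1)"
      by (rule continuous_map_product_projection) simp
    then have sub: "continuous_map (subtopology (powertop_real UNIV) (standard_simplex 1)) euclideanreal (\<lambda>t. t 1)"
      by (rule continuous_map_from_subtopology)
    have "(\<lambda>t. t 1) ` (standard_simplex 1) \<subseteq> {0..1::real}"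
      by (auto simp: standard_simplex_def)
    then show ?thesis unfolding continuous_map_in_subtopology using sub by auto
  qed
  have "continuous_map (subtopology (powertop_real UNIV) (standard_simplex 1)) X (\<lambda>t. \<gamma> (t 1))"
    using continuous_map_compose[OF c1 assms[unfolded pathin_def]] by (simp add: o_def)
  then show ?thesis unfolding singular_simplex_def path_simplex_def
    by (auto intro: continuous_map_eq)
qed

lemma face0: "singular_face 1 0 (path_simplex \<gamma>) = ptx (\<gamma> 1)"
  unfolding singular_face_def path_simplex_def ptx_def
  apply (rule ext)
  apply (auto simp: simplical_face_in_standard_simplex simplical_face_def standard_simplex_def)
  done

lemma face1: "singular_face 1 1 (path_simplex \<gamma>) = ptx (\<gamma> 0)"
  unfolding singular_face_def path_simplex_def ptx_def
  apply (rule ext)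
  apply (auto simp: simplical_face_in_standard_simplex simplical_face_def standard_simplex_def)
  done

lemma cob0: "cobdry 0 f (path_simplex \<gamma>) = f (ptx (\<gamma> 1)) - f (ptx (\<gamma> 0))"
  using face0[of \<gamma>] face1[of \<gamma>] by (simp add: cobdry_def numeral_2_eq_2)

lemma pull_path: "pullback1 g \<alpha> (path_simplex \<gamma>) = \<alpha> (path_simplex (g \<circ> \<gamma>))"
  unfolding pullback1_def simplex_map_def path_simplex_def
  by (rule arg_cong[where f=\<alpha>]) (auto simp: fun_eq_iff)


lemma eq_helper: "(a::'g::ab_group_add) - b = c \<Longrightarrow> a = b + c"
  by (metis diff_add_cancel add.commute)

lemma coh_F:
  assumes "cohomologous1 X a b"
  shows "\<exists>F. \<forall>\<gamma>. pathin X \<gamma> \<longrightarrow> a (path_simplex \<gamma>) - b (path_simplex \<gamma>) = F (\<gamma> 1) - F (\<gamma> 0)"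
proof -
  obtain f where f: "\<And>\<sigma>. singular_simplex 1 X \<sigma> \<Longrightarrow> a \<sigma> - b \<sigma> = cobdry 0 f \<sigma>"
    using assms unfolding cohomologous1_def by blast
  show ?thesis
  proof (rule exI[where x="\<lambda>p. f (ptx p)"], intro allI impI)
    fix \<gamma> assume "pathin X \<gamma>"
    then show "a (path_simplex \<gamma>) - b (path_simplex \<gamma>) = f (ptx (\<gamma> 1)) - f (ptx (\<gamma> 0))"
      using f[OF path_simplex_sing] cob0 by simp
  qed
qed

lemma path_ex:
  assumes "path_connected_space X" "p \<in> topspace X" "q \<in> topspace X"
  shows "pathin X (SOME \<gamma>. pathin X \<gamma> \<and> \<gamma> 0 = p \<and> \<gamma> 1 = q) \<and>
         (SOME \<gamma>. pathin X \<gamma> \<and> \<gamma> 0 = p \<and> \<gamma> 1 = q) 0 = p \<and>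
         (SOME \<gamma>. pathin X \<gamma> \<and> \<gamma> 0 = p \<and> \<gamma> 1 = q) 1 = q"
proof -
  have "\<exists>\<gamma>. pathin X \<gamma> \<and> \<gamma> 0 = p \<and> \<gamma> 1 = q"
    using assms by (auto simp: path_connected_space_def)
  then show ?thesis by (rule someI_ex)
qed

lemma Homeo_cont:
  assumes "g \<in> Homeo_class X \<alpha>"
  shows "continuous_map X X g" "\<And>p. p \<in> topspace X \<Longrightarrow> g p \<in> topspace X"
  using assms unfolding Homeo_class_def
  by (auto dest: homeomorphic_imp_continuous_map continuous_map_image_subset_topspace)


theorem lemma2p1:
  fixes X :: "'a topology" and \<alpha> :: "('a, 'g::ab_group_add) cochain" and x :: 'a
    and CT :: "'c itself"
  assumes "path_connected_space X"
    and "has_universal_cover CT X"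
    and "cocycle1 X \<alpha>"
    and "x \<in> topspace X"
  shows
    "(\<forall>g\<in>Homeo_class X \<alpha>. \<forall>h\<in>Homeo_class X \<alpha>. \<forall>k\<in>Homeo_class X \<alpha>.
        Gcoc X x \<alpha> h k - Gcoc X x \<alpha> (g \<circ> h) k + Gcoc X x \<alpha> g (h \<circ> k) - Gcoc X x \<alpha> g h = 0)
   \<and> (\<forall>g\<in>Homeo_class X \<alpha>. \<forall>h\<in>Homeo_class X \<alpha>. \<forall>\<gamma>.
        pathin X \<gamma> \<and> \<gamma> 0 = x \<and> \<gamma> 1 = h x \<longrightarrow>
        Gcoc X x \<alpha> g h = pair_path \<gamma> (\<lambda>\<sigma>. pullback1 g \<alpha> \<sigma> - \<alpha> \<sigma>))
   \<and> (\<forall>y \<beta>. y \<in> topspace X \<and> cocycle1 X \<beta> \<and> cohomologous1 X \<beta> \<alpha> \<longrightarrow>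
        group_cohomologous2 (Homeo_class X \<alpha>) (\<circ>) (Gcoc X x \<alpha>) (Gcoc X y \<beta>))
   \<and> (\<forall>g\<in>Homeo_class X \<alpha>. \<forall>h\<in>Homeo_class X \<alpha>.
        ((\<forall>\<sigma>. singular_simplex 1 X \<sigma> \<longrightarrow> pullback1 g \<alpha> \<sigma> = \<alpha> \<sigma>) \<or> h x = x) \<longrightarrow>
        Gcoc X x \<alpha> g h = 0)"
proof -
  let ?S = "Homeo_class X \<alpha>"
  let ?P = "\<lambda>p q. SOME \<gamma>. pathin X \<gamma> \<and> \<gamma> 0 = p \<and> \<gamma> 1 = q"
  have P: "\<And>p q. p \<in> topspace X \<Longrightarrow> q \<in> topspace X \<Longrightarrow>
      pathin X (?P p q) \<and> ?P p q 0 = p \<and> ?P p q 1 = q"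
    using path_ex[OF assms(1)] by blast
  have "\<forall>g\<in>?S. \<exists>F. \<forall>\<gamma>. pathin X \<gamma> \<longrightarrow>
      \<alpha> (path_simplex (g \<circ> \<gamma>)) - \<alpha> (path_simplex \<gamma>) = F (\<gamma> 1) - F (\<gamma> 0)"
  proof
    fix g assume "g \<in> ?S"
    then have "cohomologous1 X (pullback1 g \<alpha>) \<alpha>" by (simp add: Homeo_class_def)
    then show "\<exists>F. \<forall>\<gamma>. pathin X \<gamma> \<longrightarrow>
      \<alpha> (path_simplex (g \<circ> \<gamma>)) - \<alpha> (path_simplex \<gamma>) = F (\<gamma> 1) - F (\<gamma> 0)"
      using coh_F[of X "pullback1 g \<alpha>" \<alpha>] by (simp add: pull_path)
  qed
  then obtain F where F: "\<And>g \<gamma>. g \<in> ?S \<Longrightarrow> pathin X \<gamma> \<Longrightarrow>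
      \<alpha> (path_simplex (g \<circ> \<gamma>)) - \<alpha> (path_simplex \<gamma>) = F g (\<gamma> 1) - F g (\<gamma> 0)"
    by metis
  have Gpath: "Gcoc X p \<alpha> g h = \<alpha> (path_simplex (g \<circ> ?P p (h p))) - \<alpha> (path_simplex (?P p (h p)))"
    for p and g h :: "'a \<Rightarrow> 'a"
    by (simp add: Gcoc_def pair_path_def pull_path Let_def)
  have comp: "\<alpha> (path_simplex ((g \<circ> h) \<circ> \<gamma>)) - \<alpha> (path_simplex \<gamma>)
      = F g (h (\<gamma> 1)) - F g (h (\<gamma> 0)) + F h (\<gamma> 1) - F h (\<gamma> 0)"
    if "g \<in> ?S" "h \<in> ?S" "pathin X \<gamma>" for g h \<gamma>
  proof -
    have hp: "pathin X (h \<circ> \<gamma>)" using that Homeo_cont(1)[of h] pathin_compose by blast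
    have "\<alpha> (path_simplex ((g \<circ> h) \<circ> \<gamma>)) - \<alpha> (path_simplex \<gamma>)
       = (\<alpha> (path_simplex (g \<circ> (h \<circ> \<gamma>))) - \<alpha> (path_simplex (h \<circ> \<gamma>)))
         + (\<alpha> (path_simplex (h \<circ> \<gamma>)) - \<alpha> (path_simplex \<gamma>))"
      by (simp add: o_assoc)
    also have "\<dots> = F g (h (\<gamma> 1)) - F g (h (\<gamma> 0)) + (F h (\<gamma> 1) - F h (\<gamma> 0))"
      using F[OF that(1) hp] F[OF that(2) that(3)] by simp
    finally show ?thesis by simp
  qed
  have G: "Gcoc X x \<alpha> g h = F g (h x) - F g x" if "g \<in> ?S" "h x \<in> topspace X" for g h
    using Gpath[of x g h] F[OF that(1), of "?P x (h x)"] P[OF assms(4) that(2)] by simp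
  have Gc: "Gcoc X x \<alpha> (g \<circ> h) k = F g (h (k x)) - F g (h x) + F h (k x) - F h x"
    if "g \<in> ?S" "h \<in> ?S" "k x \<in> topspace X" for g h k
    using Gpath[of x "g \<circ> h" k] comp[OF that(1,2), of "?P x (k x)"] P[OF assms(4) that(3)] by simp
  have hx: "h p \<in> topspace X" if "h \<in> ?S" "p \<in> topspace X" for h p
    using Homeo_cont(2)[OF that] .
  have part1: "\<forall>g\<in>?S. \<forall>h\<in>?S. \<forall>k\<in>?S.
        Gcoc X x \<alpha> h k - Gcoc X x \<alpha> (g \<circ> h) k + Gcoc X x \<alpha> g (h \<circ> k) - Gcoc X x \<alpha> g h = 0"
  proof (intro ballI)
    fix g h k assume a: "g \<in> ?S" "h \<in> ?S" "k \<in> ?S"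
    have kx: "k x \<in> topspace X" using hx[OF a(3) assms(4)] .
    have hkx: "(h \<circ> k) x \<in> topspace X" using hx[OF a(2) kx] by simp
    show "Gcoc X x \<alpha> h k - Gcoc X x \<alpha> (g \<circ> h) k + Gcoc X x \<alpha> g (h \<circ> k) - Gcoc X x \<alpha> g h = 0"
      unfolding G[of h k, OF a(2) kx] Gc[of g h k, OF a(1,2) kx] G[of g "h \<circ> k", OF a(1) hkx] G[of g h, OF a(1) hx[OF a(2) assms(4)]]
      by (simp add: algebra_simps)
  qed
  have part2: "\<forall>g\<in>?S. \<forall>h\<in>?S. \<forall>\<gamma>.
        pathin X \<gamma> \<and> \<gamma> 0 = x \<and> \<gamma> 1 = h x \<longrightarrow>
        Gcoc X x \<alpha> g h = pair_path \<gamma> (\<lambda>\<sigma>. pullback1 g \<alpha> \<sigma> - \<alpha> \<sigma>)"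
  proof (intro ballI allI impI)
    fix g h \<gamma> assume a: "g \<in> ?S" "h \<in> ?S" "pathin X \<gamma> \<and> \<gamma> 0 = x \<and> \<gamma> 1 = h x"
    then show "Gcoc X x \<alpha> g h = pair_path \<gamma> (\<lambda>\<sigma>. pullback1 g \<alpha> \<sigma> - \<alpha> \<sigma>)"
      using G[of g h, OF a(1) hx[OF a(2) assms(4)]] F[OF a(1), of \<gamma>]
      by (simp add: pair_path_def pull_path)
  qed
  have part3: "\<forall>y \<beta>. y \<in> topspace X \<and> cocycle1 X \<beta> \<and> cohomologous1 X \<beta> \<alpha> \<longrightarrow>
        group_cohomologous2 ?S (\<circ>) (Gcoc X x \<alpha>) (Gcoc X y \<beta>)"
  proof (intro allI impI)
    fix y \<beta> assume a: "y \<in> topspace X \<and> cocycle1 X \<beta> \<and> cohomologous1 X \<beta> \<alpha>"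
    then have y: "y \<in> topspace X" by blast
    obtain E where E: "\<And>\<gamma>. pathin X \<gamma> \<Longrightarrow>
        \<beta> (path_simplex \<gamma>) - \<alpha> (path_simplex \<gamma>) = E (\<gamma> 1) - E (\<gamma> 0)"
      using coh_F[of X \<beta> \<alpha>] a by blast
    define \<delta> where "\<delta> = ?P y x"
    have \<delta>: "pathin X \<delta> \<and> \<delta> 0 = y \<and> \<delta> 1 = x" unfolding \<delta>_def using P[OF y assms(4)] .
    define f where "f = (\<lambda>g. - (\<alpha> (path_simplex (g \<circ> \<delta>)) - \<alpha> (path_simplex \<delta>)) + E (g y) - E y)"
    have Gy: "Gcoc X y \<beta> g h = F g (h y) - F g y + E (g (h y)) - E (g y) - E (h y) + E y"
      if "g \<in> ?S" "h \<in> ?S" for g h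
    proof -
      let ?\<gamma> = "?P y (h y)"
      have g: "pathin X ?\<gamma> \<and> ?\<gamma> 0 = y \<and> ?\<gamma> 1 = h y" using P[OF y hx[OF that(2) y]] .
      have gg: "pathin X (g \<circ> ?\<gamma>)" using g Homeo_cont(1)[OF that(1)] pathin_compose by blast
      have "Gcoc X y \<beta> g h = \<beta> (path_simplex (g \<circ> ?\<gamma>)) - \<beta> (path_simplex ?\<gamma>)"
        by (simp add: Gcoc_def pair_path_def pull_path Let_def)
      also have "\<dots> = (\<alpha> (path_simplex (g \<circ> ?\<gamma>)) + (E (g (h y)) - E (g y)))
                     - (\<alpha> (path_simplex ?\<gamma>) + (E (h y) - E y))"
      proof -
        have e1: "\<beta> (path_simplex (g \<circ> ?\<gamma>)) = \<alpha> (path_simplex (g \<circ> ?\<gamma>)) + (E (g (h y)) - E (g y))"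
          using eq_helper[OF E[OF gg]] g by simp
        have e2: "\<beta> (path_simplex ?\<gamma>) = \<alpha> (path_simplex ?\<gamma>) + (E (h y) - E y)"
          using eq_helper[OF E[of ?\<gamma>]] g by simp
        show ?thesis unfolding e1 e2 ..
      qed
      also have "\<dots> = F g (h y) - F g y + E (g (h y)) - E (g y) - E (h y) + E y"
        using F[OF that(1), of ?\<gamma>] g by (simp add: algebra_simps)
      finally show ?thesis .
    qed
    show "group_cohomologous2 ?S (\<circ>) (Gcoc X x \<alpha>) (Gcoc X y \<beta>)"
      unfolding group_cohomologous2_def
    proof (intro exI ballI)
      fix g h assume gh: "g \<in> ?S" "h \<in> ?S"
      have f1: "f g = - (F g x - F g y) + E (g y) - E y"
        proof -
        have "\<alpha> (path_simplex (g \<circ> \<delta>)) - \<alpha> (path_simplex \<delta>) = F g x - F g y" using F[OF gh(1), of \<delta>] \<delta> by simp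
        then show ?thesis by (simp only: f_def)
      qed
      have f2: "f h = - (F h x - F h y) + E (h y) - E y"
        proof -
        have "\<alpha> (path_simplex (h \<circ> \<delta>)) - \<alpha> (path_simplex \<delta>) = F h x - F h y" using F[OF gh(2), of \<delta>] \<delta> by simp
        then show ?thesis by (simp only: f_def)
      qed
      have f3: "f (g \<circ> h) = - (F g (h x) - F g (h y) + F h x - F h y) + E (g (h y)) - E y"
        proof -
        have "\<alpha> (path_simplex ((g \<circ> h) \<circ> \<delta>)) - \<alpha> (path_simplex \<delta>) = F g (h x) - F g (h y) + F h x - F h y" using comp[OF gh, of \<delta>] \<delta> by simp
        then show ?thesis by (simp only: f_def o_apply)
      qed
      show "Gcoc X x \<alpha> g h - Gcoc X y \<beta> g h = f h - f (g \<circ> h) + f g"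
        unfolding f1 f2 f3 Gy[OF gh] G[of g h, OF gh(1) hx[OF gh(2) assms(4)]]
        by (simp add: algebra_simps)
    qed
  qed
  have part4: "\<forall>g\<in>?S. \<forall>h\<in>?S.
        ((\<forall>\<sigma>. singular_simplex 1 X \<sigma> \<longrightarrow> pullback1 g \<alpha> \<sigma> = \<alpha> \<sigma>) \<or> h x = x) \<longrightarrow>
        Gcoc X x \<alpha> g h = 0"
  proof (intro ballI impI)
    fix g h assume a: "g \<in> ?S" "h \<in> ?S"
      and c: "(\<forall>\<sigma>. singular_simplex 1 X \<sigma> \<longrightarrow> pullback1 g \<alpha> \<sigma> = \<alpha> \<sigma>) \<or> h x = x"
    show "Gcoc X x \<alpha> g h = 0"
      using c
    proof
      assume e: "\<forall>\<sigma>. singular_simplex 1 X \<sigma> \<longrightarrow> pullback1 g \<alpha> \<sigma> = \<alpha> \<sigma>"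
      have "pathin X (?P x (h x))" using P[OF assms(4) hx[OF a(2) assms(4)]] by blast
      then have "pullback1 g \<alpha> (path_simplex (?P x (h x))) = \<alpha> (path_simplex (?P x (h x)))"
        using e path_simplex_sing by blast
      then show ?thesis by (simp add: Gcoc_def pair_path_def Let_def)
    next
      assume "h x = x" then show ?thesis using G[of g h, OF a(1)] assms(4) by simp
    qed
  qed
  show ?thesis using part1 part2 part3 part4 by blast
qed

end
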